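(* Let $p\in\mathbb{C}\setminus\{0\}$ and let $M$ be a nontrivial conformal module over $\mathcal{B}(p)$ which is free of rank one as a $\mathbb{C}[\partial]$-module. (1) If $p\neq-1$, then $M\cong M_{\Delta,\alpha}$ for some $\Delta,\alpha\in\mathbb{C}$. (2) If $p=-1$, then $M\cong M_{\Delta,\alpha,\beta}$ for some $\Delta,\alpha,\beta\in\mathbb{C}$. Furthermore, $M_{\Delta,\alpha}$ (resp. $M_{\Delta,\alpha,\beta}$) is irreducible if and only if $\Delta\neq0$ (resp. $\Delta\ne0$ or $\beta\neq0$). The module $M_{0,\alpha}$ (resp. $M_{0,\alpha,0}$) contains a unique nontrivial submodule $(\partial+\alpha)M_{0,\alpha}$ (resp. $(\partial+\alpha)M_{0,\alpha,0}$), which is isomorphic to $M_{1,\alpha}$ (resp. $M_{1,\alpha,0}$).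
   Context: $\mathcal{B}(p)$ ($p\in\mathbb{C}$, $p\neq0$) is the Lie conformal algebra which is a free $\mathbb{C}[\partial]$-module with basis $\{L_i\mid i\in\mathbb{Z}_+\}$ ($\mathbb{Z}_+=\{0,1,2,\dots\}$) and $\lambda$-brackets $[L_i\,{}_\lambda\,L_j]=((i+p)\partial+(i+j+2p)\lambda)L_{i+j}$. A conformal module over $\mathcal{B}(p)$ is a $\mathbb{C}[\partial]$-module $M$ with a $\mathbb{C}$-linear $\lambda$-action $\mathcal{B}(p)\otimes M\to\mathbb{C}[\lambda]\otimes M$, $a\otimes v\mapsto a\,{}_\lambda\,v$, with $(\partial a)\,{}_\lambda\,v=-\lambda a\,{}_\lambda\,v$, $a\,{}_\lambda\,(\partial v)=(\partial+\lambda)a\,{}_\lambda\,v$, $[a\,{}_\lambda\,b]\,{}_{\lambda+\mu}\,v=a\,{}_\lambda\,(b\,{}_\mu\,v)-b\,{}_\mu\,(a\,{}_\lambda\,v)$; it is nontrivial if the $\lambda$-action is not identically zero. For $\Delta,\alpha\in\mathbb{C}$, $M_{\Delta,\alpha}=\mathbb{C}[\partial]v$ is the conformal $\mathcal{B}(p)$-module with $L_0\,{}_\lambda\,v=p(\partial+\Delta\lambda+\alpha)v$ and $L_i\,{}_\lambda\,v=0$ for $i\ge1$. For $p=-1$ and $\Delta,\alpha,\beta\in\mathbb{C}$, $M_{\Delta,\alpha,\beta}=\mathbb{C}[\partial]v$ is the conformal $\mathcal{B}(-1)$-module with $L_0\,{}_\lambda\,v=-(\partial+\Delta\lambda+\alpha)v$,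 $L_1\,{}_\lambda\,v=\beta v$, and $L_i\,{}_\lambda\,v=0$ for $i\ge2$. *)

theory Defs
  imports "HOL-Computational_Algebra.Polynomial"
begin

text \<open>A module structure on a type 'm consists of a complex scalar multiplication,
  the action dd of the derivation \<partial>, and the lambda-action of the basis elements:
  act i v k is the coefficient of lambda^k in L_i _lambda v (an element of C[lambda] (x) M).
  The action of a general element of B(p) is determined by C-linearity and
  sesquilinearity from these data.\<close>

record 'm cmod =
  smul :: "complex \<Rightarrow> 'm \<Rightarrow> 'm"
  dd   :: "'m \<Rightarrow> 'm"
  act  :: "nat \<Rightarrow> 'm \<Rightarrow> nat \<Rightarrow> 'm"

definition conformal_module :: "complex \<Rightarrow> ('m::ab_group_add) cmod \<Rightarrow> bool" where
  "conformal_module p M \<longleftrightarrow>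
     Vector_Spaces.vector_space (smul M) \<and>
     (\<forall>x y. dd M (x + y) = dd M x + dd M y) \<and>
     (\<forall>c x. dd M (smul M c x) = smul M c (dd M x)) \<and>
     (\<forall>i x y k. act M i (x + y) k = act M i x k + act M i y k) \<and>
     (\<forall>i c x k. act M i (smul M c x) k = smul M c (act M i x k)) \<and>
     (\<forall>i x. finite {k. act M i x k \<noteq> 0}) \<and>
     \<comment> \<open>L_i _lambda (\<partial> v) = (\<partial> + lambda) (L_i _lambda v)\<close>
     (\<forall>i x k. act M i (dd M x) k =
        dd M (act M i x k) + (if k = 0 then 0 else act M i x (k - 1))) \<and>
     \<comment> \<open>[L_i _lambda L_j]_{lambda+mu} v = L_i _lambda (L_j _mu v) - L_j _mu (L_i _lambda v),
         compared coefficientwise at lambda^a mu^b; the left side equals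
         ((j+p) lambda - (i+p) mu) (L_{i+j} _{lambda+mu} v)\<close>
     (\<forall>i j x a b. act M i (act M j x b) a - act M j (act M i x a) b =
        (if 0 < a then smul M ((of_nat j + p) * of_nat ((a + b - 1) choose b))
                          (act M (i + j) x (a + b - 1)) else 0)
      - (if 0 < b then smul M ((of_nat i + p) * of_nat ((a + b - 1) choose a))
                          (act M (i + j) x (a + b - 1)) else 0))"

definition nontrivial_cm :: "('m::zero) cmod \<Rightarrow> bool" where
  "nontrivial_cm M \<longleftrightarrow> (\<exists>i x k. act M i x k \<noteq> 0)"

definition polyact :: "('m::comm_monoid_add) cmod \<Rightarrow> complex poly \<Rightarrow> 'm \<Rightarrow> 'm" where
  "polyact M g x = (\<Sum>k\<le>degree g. smul M (coeff g k) ((dd M ^^ k) x))"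

definition free_rank_one :: "('m::comm_monoid_add) cmod \<Rightarrow> bool" where
  "free_rank_one M \<longleftrightarrow> (\<exists>v. \<forall>x. \<exists>!g. x = polyact M g v)"

definition submodule_cm :: "('m::ab_group_add) cmod \<Rightarrow> 'm set \<Rightarrow> bool" where
  "submodule_cm M N \<longleftrightarrow> 0 \<in> N \<and> (\<forall>x\<in>N. \<forall>y\<in>N. x + y \<in> N) \<and>
     (\<forall>c. \<forall>x\<in>N. smul M c x \<in> N) \<and> (\<forall>x\<in>N. dd M x \<in> N) \<and>
     (\<forall>i k. \<forall>x\<in>N. act M i x k \<in> N)"

definition irreducible_cm :: "('m::ab_group_add) cmod \<Rightarrow> bool" where
  "irreducible_cm M \<longleftrightarrow> nontrivial_cm M \<and>
     (\<forall>N. submodule_cm M N \<longrightarrow> N = {0} \<or> N = UNIV)"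

definition cm_iso_onto :: "('a::ab_group_add) cmod \<Rightarrow> ('b::ab_group_add) cmod \<Rightarrow> 'b set \<Rightarrow> ('a \<Rightarrow> 'b) \<Rightarrow> bool" where
  "cm_iso_onto A B S f \<longleftrightarrow> bij_betw f UNIV S \<and>
     (\<forall>x y. f (x + y) = f x + f y) \<and>
     (\<forall>c x. f (smul A c x) = smul B c (f x)) \<and>
     (\<forall>x. f (dd A x) = dd B (f x)) \<and>
     (\<forall>i x k. f (act A i x k) = act B i (f x) k)"

definition cm_isomorphic :: "('a::ab_group_add) cmod \<Rightarrow> ('b::ab_group_add) cmod \<Rightarrow> bool" where
  "cm_isomorphic A B \<longleftrightarrow> (\<exists>f. cm_iso_onto A B UNIV f)"

text \<open>Concrete rank-one modules C[\<partial>]v, realised on complex poly (g \<mapsto> g(\<partial>) v).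
  taylor g k is the coefficient of lambda^k in g(\<partial>+lambda).  If L _lambda v = (\<Sum>_j lambda^j c_j(\<partial>)) v,
  then by sesquilinearity L _lambda (g(\<partial>) v) = g(\<partial>+lambda) (\<Sum>_j lambda^j c_j(\<partial>)) v.\<close>
definition taylor :: "complex poly \<Rightarrow> nat \<Rightarrow> complex poly" where
  "taylor g k = smult (1 / fact k) ((pderiv ^^ k) g)"

definition gen_act :: "(nat \<Rightarrow> complex poly) \<Rightarrow> complex poly \<Rightarrow> nat \<Rightarrow> complex poly" where
  "gen_act c g k = (\<Sum>j\<le>k. taylor g (k - j) * c j)"

text \<open>L_0 _lambda v = p(\<partial> + Delta lambda + alpha) v\<close>
definition L0coeffs :: "complex \<Rightarrow> complex \<Rightarrow> complex \<Rightarrow> nat \<Rightarrow> complex poly" where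
  "L0coeffs p \<Delta> \<alpha> j = (if j = 0 then [:p * \<alpha>, p:] else if j = 1 then [:p * \<Delta>:] else 0)"

definition Mda :: "complex \<Rightarrow> complex \<Rightarrow> complex \<Rightarrow> complex poly cmod" where
  "Mda p \<Delta> \<alpha> = \<lparr> smul = smult, dd = (\<lambda>g. [:0, 1:] * g),
     act = (\<lambda>i. if i = 0 then gen_act (L0coeffs p \<Delta> \<alpha>) else (\<lambda>g k. 0)) \<rparr>"

text \<open>p = -1: L_0 _lambda v = -(\<partial> + Delta lambda + alpha) v, L_1 _lambda v = beta v\<close>
definition Mdab :: "complex \<Rightarrow> complex \<Rightarrow> complex \<Rightarrow> complex poly cmod" where
  "Mdab \<Delta> \<alpha> \<beta> = \<lparr> smul = smult, dd = (\<lambda>g. [:0, 1:] * g),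
     act = (\<lambda>i. if i = 0 then gen_act (L0coeffs (-1) \<Delta> \<alpha>)
               else if i = 1 then gen_act (\<lambda>j. if j = 0 then [:\<beta>:] else 0)
               else (\<lambda>g k. 0)) \<rparr>"

end

theory Submission
  imports Defs
begin

lemma pderiv_pow_coeff:
  "coeff ((pderiv ^^ k) g) t * of_nat (fact t) = of_nat (fact (t+k)) * coeff (g::complex poly) (t+k)"
proof (induction k arbitrary: t)
  case 0 then show ?case by simp
next
  case (Suc k)
  have "coeff ((pderiv ^^ Suc k) g) t * of_nat (fact t)
      = coeff ((pderiv ^^ k) g) (Suc t) * of_nat (fact (Suc t))"
    by (simp add: coeff_pderiv algebra_simps)
  also have "\<dots> = of_nat (fact (Suc t + k)) * coeff g (Suc t + k)" by (rule Suc.IH)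
  finally show ?case by simp
qed

lemma taylor_coeff:
  "coeff (taylor g k) t = of_nat ((t+k) choose k) * coeff g (t+k)"
proof -
  have f: "(of_nat (fact t)::complex) \<noteq> 0" "(of_nat (fact k)::complex) \<noteq> 0" by simp_all
  have b: "(of_nat (fact (t+k))::complex) = of_nat ((t+k) choose k) * (of_nat (fact k) * of_nat (fact t))"
    using binomial_fact_lemma[of k "t+k"] by (metis add_diff_cancel_right' le_add2 mult.commute of_nat_mult)
  have "coeff ((pderiv ^^ k) g) t * of_nat (fact t) = (of_nat ((t+k) choose k) * coeff g (t+k) * of_nat (fact k)) * of_nat (fact t)"
    using pderiv_pow_coeff[of k g t] b by (simp add: algebra_simps)
  then have "coeff ((pderiv ^^ k) g) t = of_nat ((t+k) choose k) * coeff g (t+k) * of_nat (fact k)"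
    using f by simp
  then show ?thesis unfolding taylor_def using f by simp
qed

lemma taylor_0[simp]: "taylor g 0 = g"
  by (simp add: taylor_def)

lemma taylor_1: "taylor g 1 = pderiv g"
  by (simp add: taylor_def)

lemma taylor_zero[simp]: "taylor 0 k = 0"
  by (simp add: poly_eq_iff taylor_coeff)

lemma taylor_add: "taylor (g + h) k = taylor g k + taylor h k"
  by (simp add: poly_eq_iff taylor_coeff algebra_simps)

lemma taylor_smult: "taylor (smult a g) k = smult a (taylor g k)"
  by (simp add: poly_eq_iff taylor_coeff algebra_simps)

lemma taylor_minus: "taylor (- g) k = - taylor g k"
  by (simp add: poly_eq_iff taylor_coeff algebra_simps)

lemma taylor_diff: "taylor (g - h) k = taylor g k - taylor h k"
  by (simp add: poly_eq_iff taylor_coeff algebra_simps)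

lemma taylor_high: "degree g < k \<Longrightarrow> taylor g k = 0"
  by (simp add: poly_eq_iff taylor_coeff coeff_eq_0)

lemma taylor_top: "taylor g (degree g) = [:lead_coeff g:]"
proof -
  have "coeff (taylor g (degree g)) t = coeff [:lead_coeff g:] t" for t
    by (cases t) (simp_all add: taylor_coeff coeff_eq_0)
  then show ?thesis by (simp add: poly_eq_iff)
qed

lemma taylor_const: "0 < k \<Longrightarrow> taylor [:a:] k = 0"
  by (rule taylor_high) simp

lemma taylor_X0: "taylor (pCons 0 g) 0 = pCons 0 g" by simp

lemma taylor_X: "taylor (pCons 0 g) (Suc k) = pCons 0 (taylor g (Suc k)) + taylor g k"
proof -
  have "coeff (taylor (pCons 0 g) (Suc k)) t = coeff (pCons 0 (taylor g (Suc k)) + taylor g k) t" for t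
  proof (cases t)
    case 0 then show ?thesis by (simp add: taylor_coeff)
  next
    case (Suc s)
    have "(Suc s + Suc k choose Suc k) = (s + Suc k choose Suc k) + (Suc s + k choose k)"
      by (simp add: add.commute)
    then show ?thesis using Suc by (simp add: taylor_coeff algebra_simps)
  qed
  then show ?thesis by (simp add: poly_eq_iff)
qed

lemma sum_single:
  assumes "finite A" "x \<in> A" "\<And>k. k \<in> A \<Longrightarrow> k \<noteq> x \<Longrightarrow> f k = 0"
  shows "sum f A = f x"
proof -
  have "sum f A = f x + sum f (A - {x})" using assms by (simp add: sum.remove)
  also have "sum f (A - {x}) = 0" using assms by (intro sum.neutral) auto
  finally show ?thesis by simp
qed

lemma smult_sum_right: "smult a (\<Sum>i\<in>A. f i) = (\<Sum>i\<in>A. smult a (f i))"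
  by (induction A rule: infinite_finite_induct) (simp_all add: smult_add_right)

lemma pCons_0_add: "pCons 0 (x + y) = pCons 0 x + pCons 0 y"
  by simp

lemma pCons_0_sum: "pCons 0 (\<Sum>i\<in>A. f i) = (\<Sum>i\<in>A. pCons 0 (f i))"
  by (induction A rule: infinite_finite_induct) (simp_all add: pCons_0_add)

lemma gen_act_0[simp]: "gen_act c g 0 = g * c 0"
  by (simp add: gen_act_def)

lemma gen_act_zero_arg[simp]: "gen_act c 0 k = 0"
  by (simp add: gen_act_def)

lemma gen_act_zero_fun[simp]: "gen_act (\<lambda>_. 0) g k = 0"
  by (simp add: gen_act_def)

lemma gen_act_add: "gen_act c (g + h) k = gen_act c g k + gen_act c h k"
  by (simp add: gen_act_def taylor_add algebra_simps sum.distrib)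

lemma gen_act_smult: "gen_act c (smult a g) k = smult a (gen_act c g k)"
  by (simp add: gen_act_def taylor_smult smult_sum_right)

lemma gen_act_diff: "gen_act c (g - h) k = gen_act c g k - gen_act c h k"
  by (simp add: gen_act_def taylor_diff algebra_simps sum_subtractf)

lemma gen_act_X:
  "gen_act c (pCons 0 g) k = pCons 0 (gen_act c g k) + (if k = 0 then 0 else gen_act c g (k - 1))"
proof (cases k)
  case 0 then show ?thesis by simp
next
  case (Suc k')
  have "gen_act c (pCons 0 g) (Suc k') = (\<Sum>j\<le>Suc k'. taylor (pCons 0 g) (Suc k' - j) * c j)"
    by (simp add: gen_act_def)
  also have "\<dots> = (\<Sum>j\<le>Suc k'. pCons 0 (taylor g (Suc k' - j) * c j))
        + (\<Sum>j\<le>Suc k'. (if j = Suc k' then 0 else taylor g (k' - j) * c j))"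
  proof -
    have "taylor (pCons 0 g) (Suc k' - j) * c j = pCons 0 (taylor g (Suc k' - j) * c j)
          + (if j = Suc k' then 0 else taylor g (k' - j) * c j)" if "j \<le> Suc k'" for j
    proof (cases "j = Suc k'")
      case True then show ?thesis by simp
    next
      case False
      then have "Suc k' - j = Suc (k' - j)" using that by simp
      then show ?thesis using False by (simp add: taylor_X algebra_simps)
    qed
    then show ?thesis by (simp add: sum.distrib)
  qed
  also have "(\<Sum>j\<le>Suc k'. (if j = Suc k' then 0 else taylor g (k' - j) * c j))
      = (\<Sum>j\<le>k'. taylor g (k' - j) * c j)"
    by (simp add: sum.atMost_Suc)
  also have "(\<Sum>j\<le>Suc k'. pCons 0 (taylor g (Suc k' - j) * c j)) = pCons 0 (gen_act c g (Suc k'))"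
    by (simp only: gen_act_def pCons_0_sum)
  finally show ?thesis using Suc by (simp add: gen_act_def)
qed

lemma gen_act_two:
  assumes "\<And>k. 2 \<le> k \<Longrightarrow> c k = 0"
  shows "gen_act c g k = taylor g k * c 0 + (if k = 0 then 0 else taylor g (k - 1) * c 1)"
proof (cases k)
  case 0 then show ?thesis by simp
next
  case (Suc k')
  have "gen_act c g k = (\<Sum>j\<le>k. taylor g (k - j) * c j)" by (simp add: gen_act_def)
  also have "\<dots> = (\<Sum>j\<in>{0,1}. taylor g (k - j) * c j)"
  proof (rule sum.mono_neutral_right)
    show "\<forall>i\<in>{..k} - {0, 1}. taylor g (k - i) * c i = 0" using assms by auto
  qed (use Suc in auto)
  finally show ?thesis using Suc by simp
qed

lemma gen_act_const:
  assumes "degree g = 0"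
  shows "gen_act c g k = g * c k"
proof -
  have "gen_act c g k = (\<Sum>j\<le>k. taylor g (k - j) * c j)" by (simp add: gen_act_def)
  also have "\<dots> = taylor g (k - k) * c k"
    by (rule sum_single) (use assms taylor_high in auto)
  finally show ?thesis by simp
qed

definition stdm :: "complex poly cmod \<Rightarrow> bool" where
  "stdm M \<longleftrightarrow> smul M = smult \<and> dd M = (\<lambda>g. [:0, 1:] * g)"

lemma stdm_Mda: "stdm (Mda p \<Delta> \<alpha>)" by (simp add: stdm_def Mda_def)
lemma stdm_Mdab: "stdm (Mdab \<Delta> \<alpha> \<beta>)" by (simp add: stdm_def Mdab_def)

lemma Mdab_0: "Mdab \<Delta> \<alpha> 0 = Mda (-1) \<Delta> \<alpha>"
proof -
  have h: "gen_act (\<lambda>j. if j = 0 then [:0:] else 0) = (\<lambda>g k. (0::complex poly))"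
    by (auto simp: fun_eq_iff gen_act_def intro!: sum.neutral)
  show ?thesis unfolding Mdab_def Mda_def h by (simp add: fun_eq_iff)
qed

lemma sub_mult:
  assumes "stdm M" "submodule_cm M S" "g \<in> S"
  shows "h * g \<in> S"
proof (induction h)
  case 0 then show ?case using assms by (simp add: submodule_cm_def)
next
  case (pCons a h)
  have "pCons a h * g = smult a g + [:0, 1:] * (h * g)" by simp
  moreover have "smult a g \<in> S" using assms by (metis submodule_cm_def stdm_def)
  moreover have "[:0, 1:] * (h * g) \<in> S" using assms pCons by (metis submodule_cm_def stdm_def)
  ultimately show ?case using assms(2) by (metis submodule_cm_def)
qed

lemma sub_diff:
  assumes "stdm M" "submodule_cm M S" "x \<in> S" "y \<in> S"
  shows "x - y \<in> S"
proof -
  have "smult (-1) y \<in> S" using assms by (metis submodule_cm_def stdm_def)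
  then have "x + smult (-1) y \<in> S" using assms by (metis submodule_cm_def)
  then show ?thesis by simp
qed

lemma sub_univ:
  assumes "stdm M" "submodule_cm M S" "[:e:] \<in> S" "e \<noteq> 0"
  shows "S = UNIV"
proof -
  have "g \<in> S" for g
  proof -
    have "smult (1/e) g * [:e:] = g" using assms(4) by (simp add: mult.commute)
    with sub_mult[OF assms(1,2,3)] show ?thesis by metis
  qed
  then show ?thesis by auto
qed

lemma L0_act:
  "gen_act (L0coeffs p \<Delta> \<alpha>) g k = taylor g k * [:p*\<alpha>, p:] + (if k = 0 then 0 else taylor g (k - 1) * [:p*\<Delta>:])"
  by (subst gen_act_two) (auto simp: L0coeffs_def)

lemma act_Mda: "act (Mda p \<Delta> \<alpha>) i g k = (if i = 0 then taylor g k * [:p*\<alpha>, p:] + (if k = 0 then 0 else taylor g (k - 1) * [:p*\<Delta>:]) else 0)"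
  by (simp add: Mda_def L0_act)

lemma act_Mdab1: "act (Mdab \<Delta> \<alpha> \<beta>) (Suc 0) g k = taylor g k * [:\<beta>:]"
  by (simp add: Mdab_def, subst gen_act_two) auto

lemma nontriv_Mda: "p \<noteq> 0 \<Longrightarrow> nontrivial_cm (Mda p \<Delta> \<alpha>)"
  unfolding nontrivial_cm_def
  by (rule exI[of _ 0], rule exI[of _ 1], rule exI[of _ 0]) (simp add: act_Mda)

lemma nontriv_Mdab: "nontrivial_cm (Mdab \<Delta> \<alpha> \<beta>)"
  unfolding nontrivial_cm_def
  by (rule exI[of _ 0], rule exI[of _ 1], rule exI[of _ 0]) (simp add: Mdab_def L0_act L0coeffs_def)

lemma irred_Mda:
  assumes "p \<noteq> 0" "\<Delta> \<noteq> 0"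
  shows "irreducible_cm (Mda p \<Delta> \<alpha>)"
  unfolding irreducible_cm_def
proof (intro conjI allI impI)
  show "nontrivial_cm (Mda p \<Delta> \<alpha>)" using nontriv_Mda assms by auto
  fix S assume S: "submodule_cm (Mda p \<Delta> \<alpha>) S"
  show "S = {0} \<or> S = UNIV"
  proof (cases "S = {0}")
    case False
    then obtain g where g: "g \<in> S" "g \<noteq> 0" using S by (auto simp: submodule_cm_def)
    have "act (Mda p \<Delta> \<alpha>) 0 g (Suc (degree g)) \<in> S" using S g by (simp add: submodule_cm_def)
    then have "[:p * \<Delta> * lead_coeff g:] \<in> S"
      by (simp add: act_Mda taylor_high taylor_top)
    then have "S = UNIV" using sub_univ[OF stdm_Mda S] g assms by simp
    then show ?thesis by simp
  qed simp
qed

lemma irred_Mdab: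
  assumes "\<beta> \<noteq> 0"
  shows "irreducible_cm (Mdab \<Delta> \<alpha> \<beta>)"
  unfolding irreducible_cm_def
proof (intro conjI allI impI)
  show "nontrivial_cm (Mdab \<Delta> \<alpha> \<beta>)" using nontriv_Mdab by auto
  fix S assume S: "submodule_cm (Mdab \<Delta> \<alpha> \<beta>) S"
  show "S = {0} \<or> S = UNIV"
  proof (cases "S = {0}")
    case False
    then obtain g where g: "g \<in> S" "g \<noteq> 0" using S by (auto simp: submodule_cm_def)
    have "act (Mdab \<Delta> \<alpha> \<beta>) (Suc 0) g (degree g) \<in> S" using S g by (simp add: submodule_cm_def)
    then have "[:\<beta> * lead_coeff g:] \<in> S"
      by (simp add: act_Mdab1 taylor_top)
    then have "S = UNIV" using sub_univ[OF stdm_Mdab S] g assms by simp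
    then show ?thesis by simp
  qed simp
qed

definition rlin :: "complex \<Rightarrow> complex poly" where "rlin \<alpha> = [:\<alpha>, 1:]"

lemma rlin_nz[simp]: "rlin \<alpha> \<noteq> 0" by (simp add: rlin_def)
lemma rlin_deg[simp]: "degree (rlin \<alpha>) = 1" by (simp add: rlin_def)

lemma Nrange: "range (\<lambda>v. dd (Mda p \<Delta> \<alpha>) v + smul (Mda p \<Delta> \<alpha>) \<alpha> v) = range (\<lambda>h. h * rlin \<alpha>)"
  by (intro arg_cong[where f=range]) (simp add: Mda_def fun_eq_iff rlin_def algebra_simps)

lemma act_Mda0: "act (Mda p 0 \<alpha>) i g k = (if i = 0 then smult p (taylor g k * rlin \<alpha>) else 0)"
proof -
  have e: "[:p * \<alpha>, p:] = smult p (rlin \<alpha>)" by (simp add: rlin_def)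
  show ?thesis unfolding act_Mda e by simp
qed

lemma taylor_mult_lin:
  "taylor (g * rlin \<alpha>) k = taylor g k * rlin \<alpha> + (if k = 0 then 0 else taylor g (k - 1))"
proof -
  have e: "g * rlin \<alpha> = smult \<alpha> g + pCons 0 g" for g :: "complex poly" by (simp add: rlin_def algebra_simps)
  show ?thesis
  proof (cases k)
    case 0 then show ?thesis by simp
  next
    case (Suc k')
    then show ?thesis by (simp add: e taylor_add taylor_smult taylor_X)
  qed
qed

lemma N_sub:
  assumes "p \<noteq> 0"
  shows "submodule_cm (Mda p 0 \<alpha>) (range (\<lambda>h. h * rlin \<alpha>))"
  unfolding submodule_cm_def
proof (intro conjI ballI allI)
  let ?r = "rlin \<alpha>"
  show "0 \<in> range (\<lambda>h. h * ?r)" by (rule range_eqI[where x=0]) simp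
  fix x y assume "x \<in> range (\<lambda>h. h * ?r)" "y \<in> range (\<lambda>h. h * ?r)"
  then obtain a b where "x = a * ?r" "y = b * ?r" by auto
  then show "x + y \<in> range (\<lambda>h. h * ?r)" by (intro range_eqI[where x="a + b"]) (simp add: algebra_simps)
next
  let ?r = "rlin \<alpha>"
  fix c x assume "x \<in> range (\<lambda>h. h * ?r)"
  then obtain a where "x = a * ?r" by auto
  then show "smul (Mda p 0 \<alpha>) c x \<in> range (\<lambda>h. h * ?r)"
    by (intro range_eqI[where x="smult c a"]) (simp add: Mda_def)
next
  let ?r = "rlin \<alpha>"
  fix x assume "x \<in> range (\<lambda>h. h * ?r)"
  then obtain a where "x = a * ?r" by auto
  then show "dd (Mda p 0 \<alpha>) x \<in> range (\<lambda>h. h * ?r)"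
    by (intro range_eqI[where x="[:0, 1:] * a"]) (simp add: Mda_def)
next
  let ?r = "rlin \<alpha>"
  fix i k x assume "x \<in> range (\<lambda>h. h * ?r)"
  show "act (Mda p 0 \<alpha>) i x k \<in> range (\<lambda>h. h * ?r)"
  proof (cases "i = 0")
    case True
    then have "act (Mda p 0 \<alpha>) i x k = smult p (taylor x k) * ?r"
      by (simp add: act_Mda0)
    then show ?thesis by (metis rangeI)
  next
    case False
    have "act (Mda p 0 \<alpha>) i x k = 0 * ?r" using False by (simp add: act_Mda0)
    then show ?thesis by (metis rangeI)
  qed
qed

lemma N_unique:
  assumes "p \<noteq> 0"
  shows "{S. submodule_cm (Mda p 0 \<alpha>) S \<and> S \<noteq> {0} \<and> S \<noteq> UNIV} = {range (\<lambda>h. h * rlin \<alpha>)}"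
proof -
  let ?r = "rlin \<alpha>"
  let ?N = "range (\<lambda>h. h * ?r)"
  have Nne: "?N \<noteq> {0}"
  proof
    assume "?N = {0}"
    moreover have "1 * ?r \<in> ?N" by blast
    ultimately show False by simp
  qed
  have NnU: "?N \<noteq> UNIV"
  proof
    assume "?N = UNIV"
    then obtain h where h: "1 = h * ?r" by (metis UNIV_I imageE)
    then have "h \<noteq> 0" by auto
    then have "degree (h * ?r) = degree h + 1" by (subst degree_mult_eq) auto
    with h show False by (metis add_eq_0_iff_both_eq_0 degree_1 one_neq_zero)
  qed
  have "S = ?N" if S: "submodule_cm (Mda p 0 \<alpha>) S" "S \<noteq> {0}" "S \<noteq> UNIV" for S
  proof -
    obtain g where g: "g \<in> S" "g \<noteq> 0" using S by (auto simp: submodule_cm_def)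
    have "act (Mda p 0 \<alpha>) 0 g (degree g) \<in> S" using S g by (simp add: submodule_cm_def)
    moreover have "act (Mda p 0 \<alpha>) 0 g (degree g) = smult (p * lead_coeff g) ?r"
      unfolding act_Mda0 taylor_top by simp
    ultimately have sm: "smult (p * lead_coeff g) ?r \<in> S" by simp
    have cl: "\<And>c x. x \<in> S \<Longrightarrow> smult c x \<in> S" using S(1) stdm_Mda unfolding submodule_cm_def stdm_def by metis
    have "lead_coeff g \<noteq> 0" using g by simp
    then have "smult (1 / (p * lead_coeff g)) (smult (p * lead_coeff g) ?r) = ?r"
      using assms by (simp add: smult_smult)
    then have rS: "?r \<in> S" using cl[OF sm] by metis
    have NS: "?N \<subseteq> S" using sub_mult[OF stdm_Mda S(1) rS] by auto
    have "x \<in> ?N" if x: "x \<in> S" for x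
    proof (rule ccontr)
      assume xN: "x \<notin> ?N"
      define e where "e = poly x (-\<alpha>)"
      have "poly (x - [:e:]) (-\<alpha>) = 0" by (simp add: e_def)
      then have "?r dvd (x - [:e:])" using poly_eq_0_iff_dvd[of "x - [:e:]" "-\<alpha>"] by (simp add: rlin_def)
      then obtain h where h: "x - [:e:] = ?r * h" by (auto elim: dvdE)
      have "x - [:e:] \<in> S" using NS h by (auto simp: mult.commute)
      then have "x - (x - [:e:]) \<in> S" using sub_diff[OF stdm_Mda S(1) x] by blast
      then have eS: "[:e:] \<in> S" by simp
      have "e \<noteq> 0"
      proof
        assume "e = 0"
        then have "x = h * ?r" using h by (simp add: mult.commute)
        then show False using xN by auto
      qed
      then show False using sub_univ[OF stdm_Mda S(1) eS] S(3) by simp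
    qed
    then show ?thesis using NS by auto
  qed
  moreover have "submodule_cm (Mda p 0 \<alpha>) ?N" using N_sub assms .
  ultimately show ?thesis using Nne NnU by blast
qed

lemma N_iso:
  assumes "p \<noteq> 0"
  shows "cm_iso_onto (Mda p 1 \<alpha>) (Mda p 0 \<alpha>) (range (\<lambda>h. h * rlin \<alpha>)) (\<lambda>h. h * rlin \<alpha>)"
  unfolding cm_iso_onto_def
proof (intro conjI allI)
  let ?r = "rlin \<alpha>"
  show "bij_betw (\<lambda>h. h * ?r) UNIV (range (\<lambda>h. h * ?r))"
  proof (rule bij_betw_imageI)
    show "inj_on (\<lambda>h. h * ?r) UNIV"
    proof (rule inj_onI)
      fix x y assume "x * ?r = y * ?r"
      then show "x = y" using mult_right_cancel[OF rlin_nz] by blast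
    qed
  qed simp
  fix x y show "(x + y) * ?r = x * ?r + y * ?r" by (simp add: algebra_simps)
next
  fix c x show "smul (Mda p 1 \<alpha>) c x * rlin \<alpha> = smul (Mda p 0 \<alpha>) c (x * rlin \<alpha>)"
    by (simp add: Mda_def)
next
  fix x show "dd (Mda p 1 \<alpha>) x * rlin \<alpha> = dd (Mda p 0 \<alpha>) (x * rlin \<alpha>)"
    by (simp add: Mda_def algebra_simps)
next
  let ?r = "rlin \<alpha>"
  fix i x k
  have e: "[:p * \<alpha>, p:] = smult p ?r" "[:p * 1:] = smult p 1" by (simp_all add: rlin_def)
  have c1: "\<And>h. h * [:p:] = smult p h" "\<And>h. [:p:] * h = smult p h" by simp_all
  show "act (Mda p 1 \<alpha>) i x k * ?r = act (Mda p 0 \<alpha>) i (x * ?r) k"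
    unfolding act_Mda0 act_Mda e taylor_mult_lin
    by (simp add: c1 algebra_simps del: mult_pCons_left mult_pCons_right)
qed

locale cmctx =
  fixes p :: complex and M :: "('m::ab_group_add) cmod" and v :: 'm
  assumes cm: "conformal_module p M"
    and gen: "\<And>x. \<exists>!g. x = polyact M g v"
begin

sublocale V: vector_space "smul M"
  using cm by (simp add: conformal_module_def)

sublocale D: additive "dd M"
  by standard (use cm in \<open>simp add: conformal_module_def\<close>)

lemma dd_smul: "dd M (smul M c x) = smul M c (dd M x)"
  using cm by (simp add: conformal_module_def)

lemma act_additive: "additive (\<lambda>x. act M i x k)"
  by standard (use cm in \<open>simp add: conformal_module_def\<close>)

lemma act_add: "act M i (x + y) k = act M i x k + act M i y k"
  using cm by (simp add: conformal_module_def)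

lemma act_zero[simp]: "act M i 0 k = 0"
  using additive.zero[OF act_additive] .

lemma act_diff: "act M i (x - y) k = act M i x k - act M i y k"
  using additive.diff[OF act_additive] .

lemma act_smul: "act M i (smul M c x) k = smul M c (act M i x k)"
  using cm by (simp add: conformal_module_def)

lemma act_dd: "act M i (dd M x) k = dd M (act M i x k) + (if k = 0 then 0 else act M i x (k - 1))"
  using cm by (simp add: conformal_module_def)

lemma act_fin: "finite {k. act M i x k \<noteq> 0}"
  using cm by (simp add: conformal_module_def)

lemma jac: "act M i (act M j x b) a - act M j (act M i x a) b =
        (if 0 < a then smul M ((of_nat j + p) * of_nat ((a + b - 1) choose b))
                          (act M (i + j) x (a + b - 1)) else 0)
      - (if 0 < b then smul M ((of_nat i + p) * of_nat ((a + b - 1) choose a))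
                          (act M (i + j) x (a + b - 1)) else 0)"
  using cm unfolding conformal_module_def by blast

lemma polyact_bound:
  assumes "degree g < N"
  shows "polyact M g x = (\<Sum>k<N. smul M (coeff g k) ((dd M ^^ k) x))"
  unfolding polyact_def
proof (rule sum.mono_neutral_left)
  show "\<forall>i\<in>{..<N} - {..degree g}. smul M (coeff g i) ((dd M ^^ i) x) = 0"
    by (auto simp: coeff_eq_0)
qed (use assms in auto)

lemma polyact_add: "polyact M (g + h) x = polyact M g x + polyact M h x"
proof -
  define N where "N = Suc (max (degree g) (degree h))"
  have d: "degree (g + h) < N" using degree_add_le_max[of g h] by (simp add: N_def)
  have d1: "degree g < N" "degree h < N" by (simp_all add: N_def)
  show ?thesis
    unfolding polyact_bound[OF d] polyact_bound[OF d1(1)] polyact_bound[OF d1(2)]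
    by (simp add: V.scale_left_distrib sum.distrib del: sum.lessThan_Suc)
qed

lemma polyact_zero[simp]: "polyact M 0 x = 0"
  by (simp add: polyact_def)

lemma polyact_smult: "polyact M (smult c g) x = smul M c (polyact M g x)"
proof -
  have d: "degree (smult c g) < Suc (degree g)" using degree_smult_le[of c g] by simp
  have d2: "degree g < Suc (degree g)" by simp
  show ?thesis
    unfolding polyact_bound[OF d] polyact_bound[OF d2] V.scale_sum_right
    by (simp del: sum.lessThan_Suc)
qed

lemma polyact_minus: "polyact M (- g) x = - polyact M g x"
proof -
  have "polyact M g x + polyact M (- g) x = 0" using polyact_add[of g "-g" x] by simp
  then show ?thesis by (metis neg_eq_iff_add_eq_0)
qed

lemma polyact_diff: "polyact M (g - h) x = polyact M g x - polyact M h x"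
  using polyact_add[of g "-h" x] polyact_minus[of h x] by simp

lemma dd_sum: "dd M (\<Sum>k\<in>A. f k) = (\<Sum>k\<in>A. dd M (f k))"
  by (rule D.sum)

lemma polyact_pCons: "polyact M (pCons a h) x = smul M a x + dd M (polyact M h x)"
proof -
  define N where "N = Suc (degree h)"
  have d1: "degree (pCons a h) < Suc N" by (simp add: N_def degree_pCons_le le_imp_less_Suc)
  have d2: "degree h < N" by (simp add: N_def)
  have "polyact M (pCons a h) x = (\<Sum>k<Suc N. smul M (coeff (pCons a h) k) ((dd M ^^ k) x))"
    by (rule polyact_bound[OF d1])
  also have "\<dots> = smul M a x + (\<Sum>k<N. smul M (coeff h k) ((dd M ^^ Suc k) x))"
    by (simp only: sum.lessThan_Suc_shift) simp
  also have "(\<Sum>k<N. smul M (coeff h k) ((dd M ^^ Suc k) x)) = dd M (polyact M h x)"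
    by (simp add: polyact_bound[OF d2] dd_sum dd_smul)
  finally show ?thesis .
qed

lemma polyact_X: "polyact M (pCons 0 h) x = dd M (polyact M h x)"
  by (simp add: polyact_pCons D.zero)

lemma polyact_const: "polyact M [:a:] x = smul M a x"
  by (simp add: polyact_pCons D.zero)

definition psi :: "'m \<Rightarrow> complex poly" where "psi x = (THE g. x = polyact M g v)"

lemma Phi_psi[simp]: "polyact M (psi x) v = x"
  unfolding psi_def using theI'[OF gen[of x]] by simp

lemma Phi_inj: "polyact M g v = polyact M h v \<Longrightarrow> g = h"
  using gen[of "polyact M g v"] by metis

lemma psi_Phi[simp]: "psi (polyact M g v) = g"
  using Phi_inj Phi_psi by metis

lemma psi_0[simp]: "psi 0 = 0"
  using psi_Phi[of 0] by simp

lemma Phi_eq0: "polyact M g v = 0 \<longleftrightarrow> g = 0"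
  using Phi_inj[of g 0] by auto

definition cc :: "nat \<Rightarrow> nat \<Rightarrow> complex poly" where "cc i k = psi (act M i v k)"

lemma act_v: "act M i v k = polyact M (cc i k) v"
  by (simp add: cc_def)

lemma act_Phi: "act M i (polyact M g v) k = polyact M (gen_act (cc i) g k) v"
proof (induction g arbitrary: k)
  case 0 then show ?case by simp
next
  case (pCons a h)
  have ga: "gen_act (cc i) (pCons a h) k = smult a (cc i k) + pCons 0 (gen_act (cc i) h k)
            + (if k = 0 then 0 else gen_act (cc i) h (k - 1))"
  proof -
    have "pCons a h = [:a:] + pCons 0 h" by simp
    then have "gen_act (cc i) (pCons a h) k = gen_act (cc i) [:a:] k + gen_act (cc i) (pCons 0 h) k"
      by (metis gen_act_add)
    then show ?thesis by (simp add: gen_act_const gen_act_X add.assoc)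
  qed
  have "act M i (polyact M (pCons a h) v) k
      = smul M a (act M i v k) + (dd M (act M i (polyact M h v) k)
          + (if k = 0 then 0 else act M i (polyact M h v) (k - 1)))"
    by (simp add: polyact_pCons act_add act_smul act_dd)
  also have "\<dots> = polyact M (gen_act (cc i) (pCons a h) k) v"
    unfolding ga pCons.IH act_v
    by (simp add: polyact_add polyact_smult polyact_X)
  finally show ?case .
qed

lemma act_psi: "psi (act M i x k) = gen_act (cc i) (psi x) k"
proof -
  have "act M i x k = act M i (polyact M (psi x) v) k" by simp
  also have "\<dots> = polyact M (gen_act (cc i) (psi x) k) v" by (rule act_Phi)
  finally show ?thesis by simp
qed

lemma psi_add: "psi (x + y) = psi x + psi y"
proof -
  have "x + y = polyact M (psi x + psi y) v" by (simp add: polyact_add)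
  then show ?thesis by (metis psi_Phi)
qed

lemma psi_smul: "psi (smul M c x) = smult c (psi x)"
proof -
  have "smul M c x = polyact M (smult c (psi x)) v" by (simp add: polyact_smult)
  then show ?thesis by (metis psi_Phi)
qed

lemma psi_dd: "psi (dd M x) = [:0, 1:] * psi x"
proof -
  have "dd M x = polyact M (pCons 0 (psi x)) v" by (simp add: polyact_X)
  moreover have "pCons 0 (psi x) = [:0, 1:] * psi x" by simp
  ultimately show ?thesis by (metis psi_Phi)
qed

lemma cc_jac: "gen_act (cc i) (cc j b) a - gen_act (cc j) (cc i a) b =
        (if 0 < a then smult ((of_nat j + p) * of_nat ((a + b - 1) choose b)) (cc (i + j) (a + b - 1)) else 0)
      - (if 0 < b then smult ((of_nat i + p) * of_nat ((a + b - 1) choose a)) (cc (i + j) (a + b - 1)) else 0)"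
proof -
  have "polyact M (gen_act (cc i) (cc j b) a - gen_act (cc j) (cc i a) b) v
      = act M i (act M j v b) a - act M j (act M i v a) b"
    by (simp add: polyact_diff act_v act_Phi)
  also have "\<dots> = polyact M ((if 0 < a then smult ((of_nat j + p) * of_nat ((a + b - 1) choose b)) (cc (i + j) (a + b - 1)) else 0)
      - (if 0 < b then smult ((of_nat i + p) * of_nat ((a + b - 1) choose a)) (cc (i + j) (a + b - 1)) else 0)) v"
    unfolding jac by (simp add: polyact_diff polyact_smult act_v)
  finally show ?thesis by (rule Phi_inj)
qed

lemma cc_fin: "finite {k. cc i k \<noteq> 0}"
proof (rule finite_subset[OF _ act_fin[of i v]])
  show "{k. cc i k \<noteq> 0} \<subseteq> {k. act M i v k \<noteq> 0}"
    by (auto simp: cc_def)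
qed

lemma cc_nontriv:
  assumes "nontrivial_cm M"
  shows "\<exists>i k. cc i k \<noteq> 0"
proof (rule ccontr)
  assume "\<not> ?thesis"
  then have z: "cc i = (\<lambda>_. 0)" for i by auto
  from assms obtain i x k where "act M i x k \<noteq> 0" by (auto simp: nontrivial_cm_def)
  moreover have "act M i x k = 0"
    using act_psi[of i x k] unfolding z by (metis Phi_psi gen_act_zero_fun polyact_zero)
  ultimately show False by simp
qed

lemma iso_model:
  assumes "smul N = smult" "dd N = (\<lambda>g. [:0, 1:] * g)" "\<And>i. act N i = gen_act (cc i)"
  shows "cm_isomorphic M N"
  unfolding cm_isomorphic_def cm_iso_onto_def
proof (intro exI[of _ psi] conjI allI)
  show "bij_betw psi UNIV UNIV"
    unfolding bij_betw_def
  proof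
    show "inj_on psi UNIV" by (rule inj_onI) (metis Phi_psi)
    show "range psi = UNIV" using surjI[of psi "\<lambda>g. polyact M g v"] psi_Phi by blast
  qed
qed (simp_all add: assms psi_add psi_smul psi_dd act_psi)

end

lemma coeff_mul_lin:
  "coeff (h * [:q0, p:]) n = q0 * coeff h n + (if n = 0 then 0 else p * coeff h (n - 1))"
  by (cases n) (simp_all add: mult_pCons_right coeff_pCons)

lemma deg_eq:
  fixes g :: "complex poly"
  assumes "pderiv g * [:q0, p:] = smult s g" "g \<noteq> 0"
  shows "s = p * of_nat (degree g)"
proof -
  let ?n = "degree g"
  have lc: "lead_coeff g \<noteq> 0" using assms(2) by simp
  have "coeff (pderiv g * [:q0, p:]) ?n = s * lead_coeff g" using assms(1) by simp
  moreover have "coeff (pderiv g * [:q0, p:]) ?n = p * of_nat ?n * lead_coeff g"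
  proof (cases ?n)
    case 0 then show ?thesis
      by (simp add: coeff_mul_lin coeff_pderiv coeff_eq_0)
  next
    case (Suc m)
    then show ?thesis
      by (simp add: coeff_mul_lin coeff_pderiv coeff_eq_0)
  qed
  ultimately show ?thesis using lc by simp
qed

lemma taylor_Suc0: "taylor g (Suc 0) = pderiv g"
  by (simp add: taylor_def)

lemma gen_act_1: "gen_act c g 1 = pderiv g * c 0 + g * c 1"
  by (simp add: gen_act_def taylor_Suc0)

lemma gen_act_Suc0: "gen_act c g (Suc 0) = pderiv g * c 0 + g * c (Suc 0)"
  by (simp add: gen_act_def taylor_Suc0)

locale jctx =
  fixes p :: complex and c :: "nat \<Rightarrow> nat \<Rightarrow> complex poly"
  assumes p0: "p \<noteq> 0"
    and J: "\<And>i j a b. gen_act (c i) (c j b) a - gen_act (c j) (c i a) b =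
        (if 0 < a then smult ((of_nat j + p) * of_nat ((a + b - 1) choose b)) (c (i + j) (a + b - 1)) else 0)
      - (if 0 < b then smult ((of_nat i + p) * of_nat ((a + b - 1) choose a)) (c (i + j) (a + b - 1)) else 0)"
    and F: "\<And>i. finite {k. c i k \<noteq> 0}"
begin

lemma V0:
  assumes "c 0 0 = 0"
  shows "c j b = 0"
proof -
  have c0: "c 0 b = 0" for b
  proof -
    have "gen_act (c 0) (c 0 0) (Suc b) - gen_act (c 0) (c 0 (Suc b)) 0 = smult p (c 0 b)"
      by (subst J) simp
    then have "smult p (c 0 b) = 0" using assms by simp
    then show ?thesis using p0 by simp
  qed
  have "gen_act (c 0) (c j (Suc b)) 0 - gen_act (c j) (c 0 0) (Suc b) = - smult p (c j b)"
    by (subst J) simp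
  then have "smult p (c j b) = 0" using assms by simp
  then show ?thesis using p0 by simp
qed

lemma V1:
  assumes "c 0 0 \<noteq> 0"
  shows "c 0 0 = [:coeff (c 0 0) 0, p:]"
proof -
  let ?q = "c 0 0"
  have "gen_act (c 0) ?q 1 - gen_act (c 0) (c 0 1) 0 = smult p ?q"
    by (subst J) simp
  then have "pderiv ?q * ?q = [:p:] * ?q" by (simp add: gen_act_Suc0 algebra_simps)
  then have d: "pderiv ?q = [:p:]" using assms mult_right_cancel by blast
  have "coeff ?q n = coeff [:coeff ?q 0, p:] n" for n
  proof (cases n)
    case 0 then show ?thesis by simp
  next
    case (Suc m)
    have "coeff (pderiv ?q) m = coeff [:p:] m" using d by simp
    show ?thesis
    proof (cases m)
      case 0 then show ?thesis using Suc \<open>coeff (pderiv ?q) m = coeff [:p:] m\<close> by (simp add: coeff_pderiv)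
    next
      case (Suc k)
      have nz: "(of_nat (Suc (Suc k)) :: complex) \<noteq> 0" using of_nat_eq_0_iff by blast
      have "of_nat (Suc (Suc k)) * coeff ?q (Suc (Suc k)) = 0"
        using \<open>coeff (pderiv ?q) m = coeff [:p:] m\<close> Suc by (simp add: coeff_pderiv)
      then show ?thesis using nz \<open>n = Suc m\<close> Suc by simp
    qed
  qed
  then show ?thesis by (rule poly_eqI)
qed

lemma V2:
  assumes "c 0 0 \<noteq> 0"
  shows "degree (c 0 1) = 0"
proof (rule ccontr)
  assume e0: "degree (c 0 1) \<noteq> 0"
  define e where "e = degree (c 0 1)"
  define N where "N = Max {k. c 0 k \<noteq> 0}"
  have fin: "finite {k. c 0 k \<noteq> 0}" using F .
  have "N \<in> {k. c 0 k \<noteq> 0}" unfolding N_def using fin assms by (intro Max_in) auto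
  then have cN: "c 0 N \<noteq> 0" by simp
  have above: "c 0 k = 0" if "N < k" for k
    using Max_ge[OF fin, of k] that unfolding N_def by (metis (mono_tags) mem_Collect_eq not_le)
  define b where "b = N + e"
  have bN: "N < b" using e0 by (simp add: b_def e_def)
  have "gen_act (c 0) (c 0 b) 1 - gen_act (c 0) (c 0 1) b =
        smult (p * of_nat (b choose b)) (c 0 b) - (if 0 < b then smult (p * of_nat (b choose 1)) (c 0 b) else 0)"
    by (subst J) simp
  then have z: "gen_act (c 0) (c 0 1) b = 0" using above[OF bN] by simp
  have "gen_act (c 0) (c 0 1) b = (\<Sum>j\<le>b. taylor (c 0 1) (b - j) * c 0 j)" by (simp add: gen_act_def)
  also have "\<dots> = taylor (c 0 1) (b - N) * c 0 N"
  proof (rule sum_single)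
    fix k assume k: "k \<in> {..b}" "k \<noteq> N"
    show "taylor (c 0 1) (b - k) * c 0 k = 0"
    proof (cases "k < N")
      case True
      then have "degree (c 0 1) < b - k" by (simp add: b_def e_def)
      then show ?thesis by (simp add: taylor_high)
    next
      case False
      then show ?thesis using k above by simp
    qed
  qed (use bN in auto)
  also have "b - N = degree (c 0 1)" by (simp add: b_def e_def)
  finally have "[:lead_coeff (c 0 1):] * c 0 N = 0" using z by (simp add: taylor_top)
  moreover have "c 0 1 \<noteq> 0" using e0 by auto
  ultimately show False using cN by simp
qed

lemma V3:
  assumes "c 0 0 \<noteq> 0" "2 \<le> b"
  shows "c 0 b = 0"
proof (rule ccontr)
  assume nz: "c 0 b \<noteq> 0"
  have k: "c 0 1 = [:coeff (c 0 1) 0:]" using V2[OF assms(1)] by (metis degree_0_id)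
  have "gen_act (c 0) (c 0 b) 1 - gen_act (c 0) (c 0 1) b =
        smult (p * of_nat (b choose b)) (c 0 b) - (if 0 < b then smult (p * of_nat (b choose 1)) (c 0 b) else 0)"
    by (subst J) simp
  moreover have "gen_act (c 0) (c 0 1) b = c 0 1 * c 0 b"
    by (rule gen_act_const) (use V2[OF assms(1)] in simp)
  ultimately have "c 0 0 * pderiv (c 0 b) + smult (p * of_nat b) (c 0 b) = smult p (c 0 b)"
    using assms by (simp add: gen_act_Suc0 algebra_simps)
  then have "pderiv (c 0 b) * c 0 0 = smult (p - p * of_nat b) (c 0 b)"
    by (simp add: smult_diff_left eq_diff_eq mult.commute)
  moreover obtain q0 where "c 0 0 = [:q0, p:]" using V1[OF assms(1)] by blast
  ultimately have "pderiv (c 0 b) * [:q0, p:] = smult (p - p * of_nat b) (c 0 b)"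
    by simp
  from deg_eq[OF this nz] have "p - p * of_nat b = p * of_nat (degree (c 0 b))" .
  then have "p * (1 - of_nat b) = p * (of_nat (degree (c 0 b)) :: complex)"
    by (simp add: right_diff_distrib)
  then have "1 - of_nat b = (of_nat (degree (c 0 b)) :: complex)" using p0 mult_left_cancel by blast
  then have "of_nat (degree (c 0 b) + b) = (1::complex)" by (simp add: algebra_simps)
  then have "degree (c 0 b) + b = 1" using of_nat_eq_1_iff by blast
  then show False using assms by simp
qed

end

locale jctx2 = jctx +
  assumes c00: "c 0 0 \<noteq> 0"
begin

definition q0 where "q0 = coeff (c 0 0) 0"
definition kap where "kap = coeff (c 0 1) 0"

lemma cq: "c 0 0 = [:q0, p:]"
  using V1[OF c00] unfolding q0_def .

lemma ck: "c 0 1 = [:kap:]"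
  unfolding kap_def by (rule degree_0_id[OF V2[OF c00], symmetric])

lemma ck': "c 0 (Suc 0) = [:kap:]"
  using ck by simp

lemma c0hi: "2 \<le> k \<Longrightarrow> c 0 k = 0"
  using V3[OF c00] by blast

lemma gen_c0: "gen_act (c 0) g a = taylor g a * [:q0, p:] + (if a = 0 then 0 else taylor g (a - 1) * [:kap:])"
  by (subst gen_act_two) (use c0hi cq ck in auto)

lemma F1: "pderiv (c j b) * [:q0, p:] = smult (of_nat j + p - p * of_nat b) (c j b)"
proof -
  have "gen_act (c 0) (c j b) 1 - gen_act (c j) (c 0 1) b =
        smult (of_nat j + p) (c j b) - (if 0 < b then smult (p * of_nat b) (c j b) else 0)"
    by (subst J) simp
  moreover have "gen_act (c j) (c 0 1) b = c 0 1 * c j b"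
    by (rule gen_act_const) (use V2[OF c00] in simp)
  ultimately have "pderiv (c j b) * [:q0, p:] + c j b * [:kap:] - [:kap:] * c j b
      = smult (of_nat j + p) (c j b) - smult (p * of_nat b) (c j b)"
    by (cases "b = 0") (simp_all add: gen_c0 ck ck' taylor_Suc0)
  then show ?thesis by (simp add: smult_diff_left mult.commute)
qed

lemma F1deg: "c j b \<noteq> 0 \<Longrightarrow> of_nat j + p - p * of_nat b = p * of_nat (degree (c j b))"
  using deg_eq[OF F1] by blast

lemma F2:
  assumes "2 \<le> a"
  shows "taylor (c j 0) a * [:q0, p:] + taylor (c j 0) (a - 1) * [:kap:] = smult (of_nat j + p) (c j (a - 1))"
proof -
  have "gen_act (c 0) (c j 0) a - gen_act (c j) (c 0 a) 0 = smult (of_nat j + p) (c j (a - 1))"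
    by (subst J) (use assms in simp)
  then show ?thesis using assms by (simp add: gen_c0 c0hi)
qed

lemma F2z:
  assumes "c j 0 = 0"
  shows "smult (of_nat j + p) (c j b) = 0"
proof -
  have "gen_act (c 0) (c j 0) (Suc b) - gen_act (c j) (c 0 (Suc b)) 0 = smult (of_nat j + p) (c j b)"
    by (subst J) simp
  then show ?thesis using assms by simp
qed

lemma F3:
  "taylor (c j b) 2 * [:q0, p:] + pderiv (c j b) * [:kap:] =
     smult ((of_nat j + p) * of_nat (Suc b)) (c j (Suc b))
     - (if 0 < b then smult (p * of_nat (Suc b choose 2)) (c j (Suc b)) else 0)"
proof -
  have "gen_act (c 0) (c j b) 2 - gen_act (c j) (c 0 2) b =
     smult ((of_nat j + p) * of_nat (Suc b)) (c j (Suc b))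
     - (if 0 < b then smult (p * of_nat (Suc b choose 2)) (c j (Suc b)) else 0)"
    by (subst J) simp
  moreover have "taylor g (2 - 1) = pderiv g" for g by (simp add: taylor_Suc0)
  ultimately show ?thesis by (simp add: gen_c0 c0hi)
qed

end

lemma alg_contra:
  fixes S P K L X1 X2 X3 :: complex
  assumes S: "S = of_nat s" and P: "P \<noteq> 0" and L: "L \<noteq> 0"
  and h1: "P*((S+3)*(S+2)/2)*L + K*(S+3)*L = P*(S+3)*X1"
  and h2: "P*((S+3)*(S+2)*(S+1)/6)*L + K*((S+3)*(S+2)/2)*L = P*(S+3)*X2"
  and h3: "P*((S+3)*(S+2)*(S+1)*S/24)*L + K*((S+3)*(S+2)*(S+1)/6)*L = P*(S+3)*X3"
  and t1: "P*((S+2)*(S+1)/2)*X1 + K*(S+2)*X1 = (2*P*(S+3) - P)*X2"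
  and t2: "P*((S+1)*S/2)*X2 + K*(S+1)*X2 = (3*P*(S+3) - 3*P)*X3"
  shows False
proof -
  define D where "D = K / P"
  have K: "K = P * D" using P by (simp add: D_def)
  have nz: "S + of_nat k \<noteq> 0" if "k > 0" for k
  proof -
    have "S + of_nat k = of_nat (s + k)" unfolding S by simp
    then show ?thesis using that by (simp only: of_nat_eq_0_iff)
  qed
  have n3: "S + 3 \<noteq> 0" "S + 2 \<noteq> 0" "S + 1 \<noteq> 0" using nz[of 3] nz[of 2] nz[of 1] by simp_all
  have x1: "X1 = L*((S+2)/2 + D)"
  proof -
    have "P*(S+3)*X1 = P*(S+3)*(L*((S+2)/2 + D))" using h1 unfolding K by (simp add: field_simps)
    then show ?thesis using P n3 by simp
  qed
  have x2: "X2 = L*((S+2)*(S+1)/6 + D*(S+2)/2)"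
  proof -
    have "P*(S+3)*X2 = P*(S+3)*(L*((S+2)*(S+1)/6 + D*(S+2)/2))" using h2 unfolding K by (simp add: field_simps)
    then show ?thesis using P n3 by simp
  qed
  have x3: "X3 = L*((S+2)*(S+1)*S/24 + D*(S+2)*(S+1)/6)"
  proof -
    have "P*(S+3)*X3 = P*(S+3)*(L*((S+2)*(S+1)*S/24 + D*(S+2)*(S+1)/6))" using h3 unfolding K by (simp add: field_simps)
    then show ?thesis using P n3 by simp
  qed
  have i1: "(P*((S+2)*(S+1)/2)*X1 + K*(S+2)*X1) - (2*P*(S+3) - P)*X2
     = P*L*(S+2) * (12*D*D - 12*D - (S+1)*(S+4)) / 12"
    unfolding x1 x2 K by (simp add: field_simps)
  have z1: "(P*((S+2)*(S+1)/2)*X1 + K*(S+2)*X1) - (2*P*(S+3) - P)*X2 = 0" using t1 by simp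
  have e1: "P*L*(S+2) * (12*D*D - 12*D - (S+1)*(S+4)) = 0"
    using z1 unfolding i1 by simp
  have i2: "(P*((S+1)*S/2)*X2 + K*(S+1)*X2) - (3*P*(S+3) - 3*P)*X3
     = P*L*(S+2)*(S+1) * (12*D*D - (2*S+20)*D - S*S - 4*S) / 24"
    unfolding x2 x3 K by (simp add: field_simps)
  have z2: "(P*((S+1)*S/2)*X2 + K*(S+1)*X2) - (3*P*(S+3) - 3*P)*X3 = 0" using t2 by simp
  have e2: "P*L*(S+2)*(S+1) * (12*D*D - (2*S+20)*D - S*S - 4*S) = 0"
    using z2 unfolding i2 by simp
  have f1: "12*D*D - 12*D - (S+1)*(S+4) = 0" using e1 P L n3 by simp
  have f2: "12*D*D - (2*S+20)*D - S*S - 4*S = 0" using e2 P L n3 by simp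
  have "(S+4)*(2*D-1) = (12*D*D - 12*D - (S+1)*(S+4)) - (12*D*D - (2*S+20)*D - S*S - 4*S)"
    by (simp add: algebra_simps)
  then have "(S + 4) * (2*D - 1) = 0" using f1 f2 by simp
  moreover have "S + 4 \<noteq> 0" using nz[of 4] by simp
  ultimately have d: "D = 1/2" by (simp add: mult.commute)
  have "S*S + 5*S + 7 = -(12*D*D - 12*D - (S+1)*(S+4))" unfolding d by (simp add: algebra_simps)
  then have "S*S + 5*S + 7 = 0" using f1 by simp
  then have "of_nat (s*s + 5*s + 7) = (0::complex)" unfolding S by simp
  then show False by (simp only: of_nat_eq_0_iff)
qed

lemma B2: "(of_nat (n choose 2) :: complex) = of_nat n * (of_nat n - 1) / 2"
proof (induction n)
  case 0 then show ?case by simp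
next
  case (Suc n)
  have "Suc n choose 2 = n + (n choose 2)" by (simp add: numeral_2_eq_2)
  then show ?case using Suc by (simp add: field_simps)
qed
lemma B3: "(of_nat (n choose 3) :: complex) = of_nat n * (of_nat n - 1) * (of_nat n - 2) / 6"
proof (induction n)
  case 0 then show ?case by simp
next
  case (Suc n)
  have "Suc n choose 3 = (n choose 2) + (n choose 3)" by (simp add: numeral_3_eq_3 numeral_2_eq_2)
  then have "(of_nat (Suc n choose 3) :: complex) = of_nat (n choose 2) + of_nat (n choose 3)" by simp
  also have "\<dots> = of_nat n * (of_nat n - 1) / 2 + of_nat n * (of_nat n - 1) * (of_nat n - 2) / 6"
    unfolding B2 Suc.IH ..
  also have "\<dots> = of_nat (Suc n) * (of_nat (Suc n) - 1) * (of_nat (Suc n) - 2) / 6"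
    by (simp add: field_simps)
  finally show ?case .
qed
lemma B4: "(of_nat (n choose 4) :: complex) = of_nat n * (of_nat n - 1) * (of_nat n - 2) * (of_nat n - 3) / 24"
proof (induction n)
  case 0 then show ?case by simp
next
  case (Suc n)
  have "Suc n choose 4 = (n choose 3) + (n choose 4)"
    by (metis binomial_Suc_Suc add.commute numeral_3_eq_3 Suc_numeral semiring_norm(2) semiring_norm(8))
  then have "(of_nat (Suc n choose 4) :: complex) = of_nat (n choose 3) + of_nat (n choose 4)" by simp
  also have "\<dots> = of_nat n * (of_nat n - 1) * (of_nat n - 2) / 6 + of_nat n * (of_nat n - 1) * (of_nat n - 2) * (of_nat n - 3) / 24"
    unfolding B3 Suc.IH ..
  also have "\<dots> = of_nat (Suc n) * (of_nat (Suc n) - 1) * (of_nat (Suc n) - 2) * (of_nat (Suc n) - 3) / 24"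
    by (simp add: field_simps)
  finally show ?case .
qed

context jctx2
begin

lemma degb:
  assumes "c j 0 \<noteq> 0" "degree (c j 0) = s + 3" "s + 3 < t + b"
  shows "coeff (c j b) t = 0"
proof (cases "c j b = 0")
  case False
  have jp: "of_nat j + p = p * of_nat (s + 3)" using F1deg[OF assms(1)] assms(2) by simp
  have "of_nat j + p - p * of_nat b = p * of_nat (degree (c j b))" using F1deg[OF False] .
  then have "p * (of_nat (s + 3) - of_nat b) = p * of_nat (degree (c j b))"
    using jp by (simp add: algebra_simps)
  then have "of_nat (s + 3) - of_nat b = (of_nat (degree (c j b)) :: complex)"
    using p0 mult_left_cancel by blast
  then have "of_nat (s + 3) = (of_nat (degree (c j b) + b) :: complex)" by (simp add: algebra_simps)
  then have "s + 3 = degree (c j b) + b" using of_nat_eq_iff by blast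
  then show ?thesis using assms(3) by (simp add: coeff_eq_0)
qed simp

lemma K:
  assumes nz: "c j 0 \<noteq> 0" and dg: "degree (c j 0) = s + 3"
  shows False
proof -
  define S where "S = (of_nat s :: complex)"
  define lc where "lc = coeff (c j 0) (s + 3)"
  define X1 where "X1 = coeff (c j 1) (s + 2)"
  define X2 where "X2 = coeff (c j 2) (s + 1)"
  define X3 where "X3 = coeff (c j 3) s"
  have "lc = lead_coeff (c j 0)" by (simp add: lc_def dg)
  then have lc0: "lc \<noteq> 0" using nz by simp
  have jp: "of_nat j + p = p * (S + 3)" using F1deg[OF nz] dg by (simp add: S_def)
  note vb = degb[OF nz dg]
  have sc: "s + 3 = Suc (Suc (Suc s))" "s + 2 = Suc (Suc s)" "s + 1 = Suc s" by simp_all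
  have h1: "p*((S+3)*(S+2)/2)*lc + kap*(S+3)*lc = p*(S+3)*X1"
  proof -
    have "coeff (taylor (c j 0) 2 * [:q0, p:] + taylor (c j 0) (2 - 1) * [:kap:]) (s + 2)
        = coeff (smult (of_nat j + p) (c j (2 - 1))) (s + 2)"
      using F2[of 2 j] by simp
    then have "p * of_nat (s + 3 choose 2) * lc + kap * of_nat (s + 3) * lc = (of_nat j + p) * X1"
      by (simp add: coeff_mul_lin taylor_coeff vb sc lc_def X1_def algebra_simps)
    then show ?thesis unfolding jp by (simp add: B2 S_def algebra_simps)
  qed
  have h2: "p*((S+3)*(S+2)*(S+1)/6)*lc + kap*((S+3)*(S+2)/2)*lc = p*(S+3)*X2"
  proof -
    have "coeff (taylor (c j 0) 3 * [:q0, p:] + taylor (c j 0) (3 - 1) * [:kap:]) (s + 1)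
        = coeff (smult (of_nat j + p) (c j (3 - 1))) (s + 1)"
      using F2[of 3 j] by simp
    then have "p * of_nat (s + 3 choose 3) * lc + kap * of_nat (s + 3 choose 2) * lc = (of_nat j + p) * X2"
      by (simp add: coeff_mul_lin taylor_coeff vb sc lc_def X2_def algebra_simps)
    then show ?thesis unfolding jp by (simp add: B2 B3 S_def algebra_simps)
  qed
  have h3: "p*((S+3)*(S+2)*(S+1)*S/24)*lc + kap*((S+3)*(S+2)*(S+1)/6)*lc = p*(S+3)*X3"
  proof -
    have e: "coeff (taylor (c j 0) 4 * [:q0, p:] + taylor (c j 0) (4 - 1) * [:kap:]) s
        = coeff (smult (of_nat j + p) (c j (4 - 1))) s"
      using F2[of 4 j] by simp
    have "p * of_nat (s + 3 choose 4) * lc + kap * of_nat (s + 3 choose 3) * lc = (of_nat j + p) * X3"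
    proof (cases s)
      case 0
      then show ?thesis using e by (simp add: coeff_mul_lin taylor_coeff vb sc lc_def X3_def algebra_simps)
    next
      case (Suc s')
      then show ?thesis using e by (simp add: coeff_mul_lin taylor_coeff vb sc lc_def X3_def algebra_simps)
    qed
    then show ?thesis unfolding jp by (simp add: B3 B4 S_def algebra_simps)
  qed
  have t1: "p*((S+2)*(S+1)/2)*X1 + kap*(S+2)*X1 = (2*p*(S+3) - p)*X2"
  proof -
    have "coeff (taylor (c j 1) 2 * [:q0, p:] + pderiv (c j 1) * [:kap:]) (s + 1)
        = coeff (smult ((of_nat j + p) * of_nat (Suc 1)) (c j (Suc 1))
                - (if 0 < (1::nat) then smult (p * of_nat (Suc 1 choose 2)) (c j (Suc 1)) else 0)) (s + 1)"
      using F3[of j 1] by simp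
    then have "p * of_nat (s + 2 choose 2) * X1 + kap * of_nat (s + 2) * X1 = ((of_nat j + p) * 2 - p) * X2"
      by (simp add: numeral_2_eq_2[symmetric] coeff_mul_lin taylor_coeff coeff_pderiv vb sc X1_def X2_def algebra_simps)
    then show ?thesis unfolding jp by (simp add: B2 S_def algebra_simps)
  qed
  have t2: "p*((S+1)*S/2)*X2 + kap*(S+1)*X2 = (3*p*(S+3) - 3*p)*X3"
  proof -
    have e: "coeff (taylor (c j 2) 2 * [:q0, p:] + pderiv (c j 2) * [:kap:]) s
        = coeff (smult ((of_nat j + p) * of_nat (Suc 2)) (c j (Suc 2))
                - (if 0 < (2::nat) then smult (p * of_nat (Suc 2 choose 2)) (c j (Suc 2)) else 0)) s"
      using F3[of j 2] by simp
    have ch: "(3::nat) choose 2 = 3" "Suc 0 choose 2 = 0"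
      by (simp_all add: numeral_3_eq_3 numeral_2_eq_2)
    have "p * of_nat (s + 1 choose 2) * X2 + kap * of_nat (s + 1) * X2 = ((of_nat j + p) * 3 - p * 3) * X3"
    proof (cases s)
      case 0
      then show ?thesis using e by (simp add: ch coeff_mul_lin taylor_coeff coeff_pderiv vb sc X2_def X3_def algebra_simps)
    next
      case (Suc s')
      then show ?thesis using e by (simp add: ch coeff_mul_lin taylor_coeff coeff_pderiv vb sc X2_def X3_def algebra_simps)
    qed
    then show ?thesis unfolding jp by (simp add: B2 S_def algebra_simps)
  qed
  show False using alg_contra[OF S_def p0 lc0 h1 h2 h3 t1 t2] .
qed

end

context jctx2
begin

lemma Z1:
  assumes j1: "1 \<le> j" and pj: "p \<noteq> - of_nat j"
  shows "c j 0 = 0"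
proof (rule ccontr)
  assume nz: "c j 0 \<noteq> 0"
  define n where "n = degree (c j 0)"
  have e: "of_nat j + p = p * of_nat n" using F1deg[OF nz] by (simp add: n_def)
  have "n = 0 \<or> n = 1 \<or> n = 2 \<or> n = (n - 3) + 3" by arith
  then consider "n = 0" | "n = 1" | "n = 2" | s where "n = s + 3" by blast
  then show False
  proof cases
    case 1
    then have "p = - of_nat j" using e by (simp add: eq_neg_iff_add_eq_0 add.commute)
    then show False using pj by simp
  next
    case 2
    then have "of_nat j = (0::complex)" using e by simp
    then show False using j1 by simp
  next
    case 3
    then have jp: "of_nat j = p" using e by (simp add: algebra_simps)
    have c2: "c (j + j) 0 = 0"
    proof (rule ccontr)
      assume nz2: "c (j + j) 0 \<noteq> 0"
      have "of_nat (j + j) + p = p * of_nat (degree (c (j + j) 0))" using F1deg[OF nz2] by simp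
      then have "p * 3 = p * of_nat (degree (c (j + j) 0))" using jp by (simp add: algebra_simps)
      then have "(3::complex) = of_nat (degree (c (j + j) 0))" using p0 mult_left_cancel by blast
      then have "degree (c (j + j) 0) = 0 + 3"
        by (metis add_0 of_nat_eq_iff of_nat_numeral)
      then show False using K[OF nz2] by blast
    qed
    have "gen_act (c j) (c j 0) 1 - gen_act (c j) (c j 1) 0 = smult (of_nat j + p) (c (j + j) 0)"
      by (subst J) simp
    then have "pderiv (c j 0) * c j 0 = 0" using c2 by (simp add: gen_act_Suc0 algebra_simps)
    then have "pderiv (c j 0) = 0" using nz by simp
    then have "n = 0" by (simp add: n_def pderiv_eq_0_iff)
    then show False using 3 by simp
  next
    case 4
    then show False using K[OF nz] n_def by simp
  qed
qed

lemma Z2: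
  assumes "1 \<le> j" "p \<noteq> - of_nat j"
  shows "c j b = 0"
proof -
  have "smult (of_nat j + p) (c j b) = 0" using F2z[OF Z1[OF assms]] .
  moreover have "of_nat j + p \<noteq> 0" using assms(2) by (metis add.commute add_eq_0_iff)
  ultimately show ?thesis by simp
qed

lemma Z3:
  assumes "p = - of_nat j" "c j b \<noteq> 0"
  shows "b = 0 \<and> degree (c j b) = 0"
proof -
  have "of_nat j + p - p * of_nat b = p * of_nat (degree (c j b))" using F1deg[OF assms(2)] .
  then have "p * (- of_nat b) = p * of_nat (degree (c j b))" using assms(1) by (simp add: algebra_simps)
  then have h: "- of_nat b = (of_nat (degree (c j b)) :: complex)" using p0 mult_left_cancel by blast
  have "of_nat (degree (c j b) + b) = (0::complex)" by (simp add: h[symmetric])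
  then have "degree (c j b) + b = 0" by (simp only: of_nat_eq_0_iff)
  then show ?thesis by auto
qed

lemma Z4:
  assumes pj: "p = - of_nat j" and j2: "2 \<le> j"
  shows "c j 0 = 0"
proof -
  have "p \<noteq> - of_nat 1"
  proof
    assume "p = - of_nat 1"
    then have "of_nat j = (of_nat 1 :: complex)" using pj by simp
    then have "j = 1" using of_nat_eq_iff by blast
    then show False using j2 by simp
  qed
  then have c10: "c 1 0 = 0" using Z1[of 1] by simp
  have "gen_act (c 1) (c (j - 1) 0) 1 - gen_act (c (j - 1)) (c 1 1) 0
      = smult (of_nat (j - 1) + p) (c (1 + (j - 1)) 0)"
    by (subst J) simp
  then have "smult (of_nat (j - 1) + p) (c j 0) = 0" using c10 j2 by (simp add: gen_act_Suc0)
  moreover have "of_nat (j - 1) + p = -1" using pj j2 by (simp add: of_nat_diff)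
  ultimately show ?thesis by simp
qed

lemma cls:
  assumes "1 \<le> j" "\<not> (j = 1 \<and> p = -1)"
  shows "c j b = 0"
proof (cases "p = - of_nat j")
  case True
  then have j2: "2 \<le> j" using assms by (cases j) auto
  show ?thesis
  proof (cases b)
    case 0 then show ?thesis using Z4[OF True j2] by simp
  next
    case (Suc b') then show ?thesis using Z3[OF True] by auto
  qed
next
  case False
  then show ?thesis using Z2 assms(1) by blast
qed

lemma cls1:
  assumes "p = -1"
  shows "\<And>b. 1 \<le> b \<Longrightarrow> c 1 b = 0" and "degree (c 1 0) = 0"
proof -
  have pj: "p = - of_nat 1" using assms by simp
  show "c 1 b = 0" if "1 \<le> b" for b using Z3[OF pj, of b] that by auto
  show "degree (c 1 0) = 0" using Z3[OF pj, of 0] by (cases "c 1 0 = 0") auto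
qed

end

lemma classify:
  fixes p :: complex and M :: "('m::ab_group_add) cmod"
  assumes p0: "p \<noteq> 0" and cm: "conformal_module p M" and nt: "nontrivial_cm M" and fr: "free_rank_one M"
  obtains v where "cmctx p M v" "jctx2 p (cmctx.cc M v)"
proof -
  obtain v where gen: "\<And>x. \<exists>!g. x = polyact M g v" using fr unfolding free_rank_one_def by blast
  interpret C: cmctx p M v by standard (use cm gen in auto)
  interpret JJ: jctx p C.cc by standard (use p0 C.cc_jac C.cc_fin in auto)
  have "C.cc 0 0 \<noteq> 0"
  proof
    assume "C.cc 0 0 = 0"
    then have "C.cc i k = 0" for i k using JJ.V0 by blast
    with C.cc_nontriv[OF nt] show False by blast
  qed
  then have "jctx2 p C.cc" by unfold_locales
  then show ?thesis using that C.cmctx_axioms by blast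
qed

lemma part12:
  fixes p :: complex and M :: "('m::ab_group_add) cmod"
  assumes p0: "p \<noteq> 0" and cm: "conformal_module p M" and nt: "nontrivial_cm M" and fr: "free_rank_one M"
  shows "(p \<noteq> -1 \<longrightarrow> (\<exists>\<Delta> \<alpha>. cm_isomorphic M (Mda p \<Delta> \<alpha>)))
       \<and> (p = -1 \<longrightarrow> (\<exists>\<Delta> \<alpha> \<beta>. cm_isomorphic M (Mdab \<Delta> \<alpha> \<beta>)))"
proof -
  obtain v where h1: "cmctx p M v" and h2: "jctx2 p (cmctx.cc M v)"
    using classify[OF assms] by blast
  interpret C: cmctx p M v by (rule h1)
  interpret J2: jctx2 p C.cc by (rule h2)
  define \<Delta> where "\<Delta> = jctx2.kap C.cc / p"
  define \<alpha> where "\<alpha> = jctx2.q0 C.cc / p"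
  have c0: "C.cc 0 = L0coeffs p \<Delta> \<alpha>"
  proof
    fix k show "C.cc 0 k = L0coeffs p \<Delta> \<alpha> k"
    proof (cases "k = 0")
      case True then show ?thesis using J2.cq p0 by (simp add: L0coeffs_def \<alpha>_def)
    next
      case False
      show ?thesis
      proof (cases "k = 1")
        case True then show ?thesis using J2.ck p0 by (simp add: L0coeffs_def \<Delta>_def)
      next
        case False
        then show ?thesis using \<open>k \<noteq> 0\<close> J2.c0hi[of k] by (simp add: L0coeffs_def)
      qed
    qed
  qed
  have z: "gen_act (\<lambda>_. 0) = (\<lambda>g k. 0)" by (simp add: fun_eq_iff)
  have P1: "\<exists>\<Delta> \<alpha>. cm_isomorphic M (Mda p \<Delta> \<alpha>)" if pm: "p \<noteq> -1"
  proof -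
    have ci: "C.cc i = (\<lambda>_. 0)" if "i \<noteq> 0" for i
      using J2.cls[of i] that pm by (auto simp: fun_eq_iff)
    have "act (Mda p \<Delta> \<alpha>) i = gen_act (C.cc i)" for i
      by (cases "i = 0") (simp_all add: Mda_def c0 ci z)
    then have "cm_isomorphic M (Mda p \<Delta> \<alpha>)"
      by (intro C.iso_model) (simp_all add: Mda_def)
    then show ?thesis by blast
  qed
  have P2: "\<exists>\<Delta> \<alpha> \<beta>. cm_isomorphic M (Mdab \<Delta> \<alpha> \<beta>)" if pm: "p = -1"
  proof -
    define \<beta> where "\<beta> = coeff (C.cc 1 0) 0"
    have ci: "C.cc i = (\<lambda>_. 0)" if "2 \<le> i" for i
      using J2.cls[of i] that by (auto simp: fun_eq_iff)
    have c1: "C.cc 1 = (\<lambda>j. if j = 0 then [:\<beta>:] else 0)"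
    proof
      fix b show "C.cc 1 b = (if b = 0 then [:\<beta>:] else 0)"
      proof (cases "b = 0")
        case True
        then show ?thesis using J2.cls1(2)[OF pm] degree_0_id[of "C.cc 1 0"] by (simp add: \<beta>_def)
      next
        case False then show ?thesis using J2.cls1(1)[OF pm, of b] by simp
      qed
    qed
    have "act (Mdab \<Delta> \<alpha> \<beta>) i = gen_act (C.cc i)" for i
    proof -
      consider "i = 0" | "i = 1" | "2 \<le> i" by arith
      then show ?thesis
      proof cases
        case 1 then show ?thesis using pm by (simp add: Mdab_def c0)
      next
        case 2
        have c1': "C.cc (Suc 0) = (\<lambda>j. if j = 0 then [:\<beta>:] else 0)" using c1 by simp
        show ?thesis using 2 by (simp add: Mdab_def c1')
      next
        case 3 then show ?thesis by (simp add: Mdab_def ci z)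
      qed
    qed
    then have "cm_isomorphic M (Mdab \<Delta> \<alpha> \<beta>)"
      by (intro C.iso_model) (simp_all add: Mdab_def)
    then show ?thesis by blast
  qed
  show ?thesis using P1 P2 by blast
qed

lemma irr_iff:
  assumes "p \<noteq> 0"
  shows "irreducible_cm (Mda p \<Delta> \<alpha>) \<longleftrightarrow> \<Delta> \<noteq> 0"
proof
  assume irr: "irreducible_cm (Mda p \<Delta> \<alpha>)"
  show "\<Delta> \<noteq> 0"
  proof
    assume d: "\<Delta> = 0"
    have "range (\<lambda>h. h * rlin \<alpha>) \<in> {S. submodule_cm (Mda p 0 \<alpha>) S \<and> S \<noteq> {0} \<and> S \<noteq> UNIV}"
      using N_unique[OF assms] by simp
    then show False using irr d unfolding irreducible_cm_def by blast
  qed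
qed (use irred_Mda assms in blast)

theorem theorem4p1:
  fixes p :: complex and M :: "('m::ab_group_add) cmod"
  assumes "p \<noteq> 0"
  shows
   "((conformal_module p M \<and> nontrivial_cm M \<and> free_rank_one M \<and> p \<noteq> -1)
        \<longrightarrow> (\<exists>\<Delta> \<alpha>. cm_isomorphic M (Mda p \<Delta> \<alpha>)))
    \<and> ((conformal_module p M \<and> nontrivial_cm M \<and> free_rank_one M \<and> p = -1)
        \<longrightarrow> (\<exists>\<Delta> \<alpha> \<beta>. cm_isomorphic M (Mdab \<Delta> \<alpha> \<beta>)))
    \<and> (\<forall>\<Delta> \<alpha>. irreducible_cm (Mda p \<Delta> \<alpha>) \<longleftrightarrow> \<Delta> \<noteq> 0)
    \<and> (\<forall>\<Delta> \<alpha> \<beta>. irreducible_cm (Mdab \<Delta> \<alpha> \<beta>) \<longleftrightarrow> (\<Delta> \<noteq> 0 \<or> \<beta> \<noteq> 0))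
    \<and> (\<forall>\<alpha>. let M0 = Mda p 0 \<alpha>; N = range (\<lambda>v. dd M0 v + smul M0 \<alpha> v) in
          {S. submodule_cm M0 S \<and> S \<noteq> {0} \<and> S \<noteq> UNIV} = {N}
          \<and> (\<exists>f. cm_iso_onto (Mda p 1 \<alpha>) M0 N f))
    \<and> (\<forall>\<alpha>. let M0 = Mdab 0 \<alpha> 0; N = range (\<lambda>v. dd M0 v + smul M0 \<alpha> v) in
          {S. submodule_cm M0 S \<and> S \<noteq> {0} \<and> S \<noteq> UNIV} = {N}
          \<and> (\<exists>f. cm_iso_onto (Mdab 1 \<alpha> 0) M0 N f))"
proof (intro conjI allI impI)
  show "\<exists>\<Delta> \<alpha>. cm_isomorphic M (Mda p \<Delta> \<alpha>)"
    if H: "conformal_module p M \<and> nontrivial_cm M \<and> free_rank_one M \<and> p \<noteq> -1"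
  proof -
    have "conformal_module p M" "nontrivial_cm M" "free_rank_one M" "p \<noteq> -1" using H by simp_all
    from part12[OF assms this(1-3)] this(4) show ?thesis by simp
  qed
  show "\<exists>\<Delta> \<alpha> \<beta>. cm_isomorphic M (Mdab \<Delta> \<alpha> \<beta>)"
    if H: "conformal_module p M \<and> nontrivial_cm M \<and> free_rank_one M \<and> p = -1"
  proof -
    have "conformal_module p M" "nontrivial_cm M" "free_rank_one M" "p = -1" using H by auto
    from part12[OF assms this(1-3)] this(4) show ?thesis by simp
  qed
next
  fix \<Delta> \<alpha> show "irreducible_cm (Mda p \<Delta> \<alpha>) \<longleftrightarrow> \<Delta> \<noteq> 0" using irr_iff[OF assms] .
next
  fix \<Delta> \<alpha> \<beta>
  show "irreducible_cm (Mdab \<Delta> \<alpha> \<beta>) \<longleftrightarrow> (\<Delta> \<noteq> 0 \<or> \<beta> \<noteq> 0)"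
  proof (cases "\<beta> = 0")
    case True
    have "irreducible_cm (Mdab \<Delta> \<alpha> \<beta>) \<longleftrightarrow> \<Delta> \<noteq> 0"
      unfolding True Mdab_0 by (rule irr_iff) simp
    then show ?thesis using True by simp
  next
    case False
    then show ?thesis using irred_Mdab[OF False] by simp
  qed
next
  fix \<alpha>
  have N: "range (\<lambda>v. dd (Mda p 0 \<alpha>) v + smul (Mda p 0 \<alpha>) \<alpha> v) = range (\<lambda>h. h * rlin \<alpha>)"
    by (rule Nrange)
  show "let M0 = Mda p 0 \<alpha>; N = range (\<lambda>v. dd M0 v + smul M0 \<alpha> v) in
          {S. submodule_cm M0 S \<and> S \<noteq> {0} \<and> S \<noteq> UNIV} = {N}
          \<and> (\<exists>f. cm_iso_onto (Mda p 1 \<alpha>) M0 N f)"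
    unfolding Let_def N using N_unique[OF assms, of \<alpha>] N_iso[OF assms, of \<alpha>] by (intro conjI exI) assumption+
next
  fix \<alpha>
  have m: "-1 \<noteq> (0::complex)" by simp
  have N: "range (\<lambda>v. dd (Mda (-1) 0 \<alpha>) v + smul (Mda (-1) 0 \<alpha>) \<alpha> v) = range (\<lambda>h. h * rlin \<alpha>)"
    by (rule Nrange)
  show "let M0 = Mdab 0 \<alpha> 0; N = range (\<lambda>v. dd M0 v + smul M0 \<alpha> v) in
          {S. submodule_cm M0 S \<and> S \<noteq> {0} \<and> S \<noteq> UNIV} = {N}
          \<and> (\<exists>f. cm_iso_onto (Mdab 1 \<alpha> 0) M0 N f)"
    unfolding Let_def Mdab_0 N using N_unique[OF m, of \<alpha>] N_iso[OF m, of \<alpha>] by (intro conjI exI) assumption+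
qed

end
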